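(* Let $f\in C^\infty(\mathbb{R})$ with $f'(0)=0$, let $u_0\in C^\infty(\mathbb{R})$ be bounded with bounded derivatives, and let $u\in C^\infty((0,\infty)\times\mathbb{R},\mathbb{R})$ be the smooth solution of $u_t=u_{xx}+f'(u)u_x$, $u(0,\cdot)=u_0$. Assume there exists $(t_0,\xi_0)\in(0,\infty)\times\mathbb{R}$ such that $$u(t_0,\xi_0)=0,\quad u_x(t_0,\xi_0)=0,\quad u_{xx}(t_0,\xi_0)\neq0.$$ Then for $t<t_0$ near $t_0$ there exist two roots $\xi_{1,2}(t)$ of $u(t,\cdot)$ near $\xi_0$ such that $$\xi_{1,2}(t)-\xi_0=\pm\sqrt{2(t_0-t)}+\mathcal{O}(t_0-t),\qquad u_x(t,\xi_{1,2}(t))=\pm\sqrt{2(t_0-t)}\,u_{xx}(t_0,\xi_0)+\mathcal{O}(t_0-t)$$ as $t\to t_0^-$, and for $t>t_0$ near $t_0$ no roots of $u(t,\cdot)$ near $\xi_0$ exist. *)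

theory Defs
  imports "HOL-Analysis.Analysis" "HOL-Library.Landau_Symbols"
begin

definition smooth_real :: "(real \<Rightarrow> real) \<Rightarrow> bool" where
  "smooth_real g \<longleftrightarrow> (\<forall>n x. ((deriv ^^ n) g) differentiable (at x))"

text \<open>Partial derivatives of a function of (t,x): True = d/dt, False = d/dx.\<close>
definition pd :: "bool \<Rightarrow> (real \<times> real \<Rightarrow> real) \<Rightarrow> real \<times> real \<Rightarrow> real" where
  "pd b g = (\<lambda>(t, x). if b then deriv (\<lambda>s. g (s, x)) t else deriv (\<lambda>y. g (t, y)) x)"

definition smooth_on2 :: "(real \<times> real) set \<Rightarrow> (real \<times> real \<Rightarrow> real) \<Rightarrow> bool" where
  "smooth_on2 S g \<longleftrightarrow>
     (\<forall>ds. continuous_on S (fold pd ds g) \<and>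
        (\<forall>t x. (t, x) \<in> S \<longrightarrow>
           ((\<lambda>s. fold pd ds g (s, x)) has_real_derivative pd True (fold pd ds g) (t, x)) (at t) \<and>
           ((\<lambda>y. fold pd ds g (t, y)) has_real_derivative pd False (fold pd ds g) (t, x)) (at x)))"

end

theory Submission
  imports Defs
begin

lemma lip1:
  fixes \<phi> \<phi>' :: "real \<Rightarrow> real"
  assumes d: "\<And>x. min p q \<le> x \<Longrightarrow> x \<le> max p q \<Longrightarrow> (\<phi> has_real_derivative \<phi>' x) (at x)"
      and b: "\<And>x. min p q \<le> x \<Longrightarrow> x \<le> max p q \<Longrightarrow> \<bar>\<phi>' x\<bar> \<le> L"
  shows "\<bar>\<phi> q - \<phi> p\<bar> \<le> L * \<bar>q - p\<bar>"
proof (cases "p = q")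
  case True then show ?thesis by simp
next
  case False
  have gen: "\<bar>\<phi> y - \<phi> x\<bar> \<le> L * \<bar>y - x\<bar>" if xy: "x < y" "min p q = x" "max p q = y" for x y
  proof -
    have dd: "\<And>z. x \<le> z \<Longrightarrow> z \<le> y \<Longrightarrow> (\<phi> has_real_derivative \<phi>' z) (at z)"
      using d xy by auto
    obtain z where z: "x < z" "z < y" "\<phi> y - \<phi> x = (y - x) * \<phi>' z"
      using MVT2[OF xy(1) dd] by blast
    have "\<bar>\<phi>' z\<bar> \<le> L" using b xy z by auto
    then have "\<bar>y - x\<bar> * \<bar>\<phi>' z\<bar> \<le> \<bar>y - x\<bar> * L" by (simp add: mult_left_mono)
    then show ?thesis using z by (simp add: abs_mult mult.commute)
  qed
  show ?thesis
  proof (cases "p < q")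
    case True then show ?thesis using gen[of p q] by auto
  next
    case f: False
    then have "q < p" using False by auto
    then show ?thesis using gen[of q p] by (auto simp: abs_minus_commute)
  qed
qed

lemma taylor2:
  fixes \<phi> \<phi>1 \<phi>2 :: "real \<Rightarrow> real"
  assumes d1: "\<And>x. min p q \<le> x \<Longrightarrow> x \<le> max p q \<Longrightarrow> (\<phi> has_real_derivative \<phi>1 x) (at x)"
      and d2: "\<And>x. min p q \<le> x \<Longrightarrow> x \<le> max p q \<Longrightarrow> (\<phi>1 has_real_derivative \<phi>2 x) (at x)"
      and b: "\<And>x. min p q \<le> x \<Longrightarrow> x \<le> max p q \<Longrightarrow> \<bar>\<phi>2 x - c\<bar> \<le> L"
  shows "\<bar>\<phi> q - \<phi> p - \<phi>1 p * (q - p) - c / 2 * (q - p)^2\<bar> \<le> L / 2 * (q - p)^2"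
proof (cases "p = q")
  case True then show ?thesis by simp
next
  case False
  define diff where "diff = (\<lambda>m::nat. if m = 0 then \<phi> else if m = 1 then \<phi>1 else \<phi>2)"
  have "\<exists>t. (if q < p then q < t \<and> t < p else p < t \<and> t < q) \<and>
    \<phi> q = (\<Sum>m<2. (diff m p / fact m) * (q - p)^m) + (diff 2 t / fact 2) * (q - p)^2"
    apply (rule Taylor[of 2 diff \<phi> "min p q" "max p q"])
    using False d1 d2 by (auto simp: diff_def less_2_cases_iff)
  then obtain t where t0: "(if q < p then q < t \<and> t < p else p < t \<and> t < q)"
    and eq0: "\<phi> q = (\<Sum>m<2. (diff m p / fact m) * (q - p)^m) + (diff 2 t / fact 2) * (q - p)^2"
    by blast
  have t: "min p q \<le> t" "t \<le> max p q" using t0 by (auto split: if_splits)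
  have eq: "\<phi> q = \<phi> p + \<phi>1 p * (q - p) + \<phi>2 t / 2 * (q - p)^2"
    using eq0 by (simp add: diff_def numeral_2_eq_2 lessThan_Suc)
  have "\<phi> q - \<phi> p - \<phi>1 p * (q - p) - c / 2 * (q - p)^2 = (\<phi>2 t - c) / 2 * (q - p)^2"
    using eq by (simp add: field_simps)
  also have "\<bar>\<dots>\<bar> = \<bar>\<phi>2 t - c\<bar> / 2 * (q - p)^2" by (simp add: abs_mult)
  also have "\<dots> \<le> L / 2 * (q - p)^2" using b[OF t] by (simp add: mult_right_mono divide_right_mono)
  finally show ?thesis .
qed

lemma cont_bound:
  fixes F :: "real \<times> real \<Rightarrow> real"
  assumes "continuous_on K F" "compact K"
  shows "\<exists>M. \<forall>p\<in>K. \<bar>F p\<bar> \<le> M"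
proof -
  have "bounded (F ` K)" using assms compact_continuous_image compact_imp_bounded by blast
  then obtain M where "\<forall>x\<in>F ` K. norm x \<le> M" unfolding bounded_iff by blast
  then show ?thesis by auto
qed


lemma est:
  fixes U Gx Gxx Gt Gtt Gxt Gxxx Gxxt :: "real \<Rightarrow> real \<Rightarrow> real"
  assumes r: "0 < r" "r \<le> 1"
   and D1: "\<And>t x. \<bar>t-t0\<bar> \<le> r \<Longrightarrow> \<bar>x-\<xi>0\<bar> \<le> r \<Longrightarrow> ((\<lambda>y. U t y) has_real_derivative Gx t x) (at x)"
   and D2: "\<And>t x. \<bar>t-t0\<bar> \<le> r \<Longrightarrow> \<bar>x-\<xi>0\<bar> \<le> r \<Longrightarrow> ((\<lambda>y. Gx t y) has_real_derivative Gxx t x) (at x)"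
   and D3: "\<And>t x. \<bar>t-t0\<bar> \<le> r \<Longrightarrow> \<bar>x-\<xi>0\<bar> \<le> r \<Longrightarrow> ((\<lambda>y. Gxx t y) has_real_derivative Gxxx t x) (at x)"
   and D4: "\<And>t x. \<bar>t-t0\<bar> \<le> r \<Longrightarrow> \<bar>x-\<xi>0\<bar> \<le> r \<Longrightarrow> ((\<lambda>s. Gxx s x) has_real_derivative Gxxt t x) (at t)"
   and D5: "\<And>t x. \<bar>t-t0\<bar> \<le> r \<Longrightarrow> \<bar>x-\<xi>0\<bar> \<le> r \<Longrightarrow> ((\<lambda>s. U s x) has_real_derivative Gt t x) (at t)"
   and D6: "\<And>t x. \<bar>t-t0\<bar> \<le> r \<Longrightarrow> \<bar>x-\<xi>0\<bar> \<le> r \<Longrightarrow> ((\<lambda>s. Gt s x) has_real_derivative Gtt t x) (at t)"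
   and D7: "\<And>t x. \<bar>t-t0\<bar> \<le> r \<Longrightarrow> \<bar>x-\<xi>0\<bar> \<le> r \<Longrightarrow> ((\<lambda>s. Gx s x) has_real_derivative Gxt t x) (at t)"
   and B: "\<And>t x. \<bar>t-t0\<bar> \<le> r \<Longrightarrow> \<bar>x-\<xi>0\<bar> \<le> r \<Longrightarrow>
            \<bar>Gtt t x\<bar> \<le> L \<and> \<bar>Gxt t x\<bar> \<le> L \<and> \<bar>Gxxx t x\<bar> \<le> L \<and> \<bar>Gxxt t x\<bar> \<le> L"
   and V: "U t0 \<xi>0 = 0" "Gx t0 \<xi>0 = 0" "Gxx t0 \<xi>0 = a" "Gt t0 \<xi>0 = a"
   and ty: "\<bar>t-t0\<bar> \<le> r" "\<bar>y\<bar> \<le> r"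
  shows "\<bar>U t (\<xi>0 + y) - a * ((t - t0) + y^2/2)\<bar> \<le> 2*L*((t-t0)^2 + \<bar>t-t0\<bar>*\<bar>y\<bar> + \<bar>y\<bar>^3)"
    and "\<bar>Gx t (\<xi>0 + y) - a * y\<bar> \<le> 2*L*\<bar>t-t0\<bar> + L*y^2"
proof -
  define T where "T = \<bar>t-t0\<bar>"
  define Y where "Y = \<bar>y\<bar>"
  have L0: "0 \<le> L" using B[of t0 \<xi>0] r by auto
  have LC: "\<bar>Gxx t z - a\<bar> \<le> L * (\<bar>z - \<xi>0\<bar> + T)" if z: "\<bar>z - \<xi>0\<bar> \<le> r" for z
  proof -
    have "\<bar>Gxx t z - Gxx t \<xi>0\<bar> \<le> L * \<bar>z - \<xi>0\<bar>"
      apply (rule lip1[of \<xi>0 z "\<lambda>y. Gxx t y" "\<lambda>y. Gxxx t y"])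
      using D3 B ty z by (auto simp: min_def max_def split: if_splits)
    moreover have "\<bar>Gxx t \<xi>0 - Gxx t0 \<xi>0\<bar> \<le> L * \<bar>t - t0\<bar>"
      apply (rule lip1[of t0 t "\<lambda>s. Gxx s \<xi>0" "\<lambda>s. Gxxt s \<xi>0"])
      using D4 B ty r by (auto simp: min_def max_def split: if_splits)
    ultimately show ?thesis using V unfolding T_def by (simp add: algebra_simps)
  qed
  have LB: "\<bar>Gx t \<xi>0\<bar> \<le> L * T"
  proof -
    have "\<bar>Gx t \<xi>0 - Gx t0 \<xi>0\<bar> \<le> L * \<bar>t - t0\<bar>"
      apply (rule lip1[of t0 t "\<lambda>s. Gx s \<xi>0" "\<lambda>s. Gxt s \<xi>0"])
      using D7 B ty r by (auto simp: min_def max_def split: if_splits)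
    then show ?thesis using V unfolding T_def by simp
  qed
  have LA: "\<bar>U t \<xi>0 - a * (t - t0)\<bar> \<le> L/2 * T^2"
  proof -
    have "\<bar>U t \<xi>0 - U t0 \<xi>0 - Gt t0 \<xi>0 * (t - t0) - 0/2 * (t-t0)^2\<bar> \<le> L/2 * (t-t0)^2"
      apply (rule taylor2[of t0 t "\<lambda>s. U s \<xi>0" "\<lambda>s. Gt s \<xi>0" "\<lambda>s. Gtt s \<xi>0"])
      using D5 D6 B ty r by (auto simp: min_def max_def split: if_splits)
    then show ?thesis using V unfolding T_def by simp
  qed
  have R: "\<bar>U t (\<xi>0+y) - U t \<xi>0 - Gx t \<xi>0 * y - a/2 * y^2\<bar> \<le> (L * (Y + T))/2 * y^2"
  proof -
    have "\<bar>U t (\<xi>0+y) - U t \<xi>0 - Gx t \<xi>0 * ((\<xi>0+y) - \<xi>0) - a/2 * ((\<xi>0+y) - \<xi>0)^2\<bar>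
          \<le> (L * (Y + T))/2 * ((\<xi>0+y) - \<xi>0)^2"
    proof (rule taylor2[of \<xi>0 "\<xi>0+y" "\<lambda>z. U t z" "\<lambda>z. Gx t z" "\<lambda>z. Gxx t z"])
      fix z assume z: "min \<xi>0 (\<xi>0 + y) \<le> z" "z \<le> max \<xi>0 (\<xi>0 + y)"
      then have zz: "\<bar>z - \<xi>0\<bar> \<le> Y" unfolding Y_def by (auto simp: min_def max_def split: if_splits)
      then have zr: "\<bar>z - \<xi>0\<bar> \<le> r" using ty Y_def by simp
      show "((\<lambda>z. U t z) has_real_derivative Gx t z) (at z)" using D1 ty zr by auto
      show "((\<lambda>z. Gx t z) has_real_derivative Gxx t z) (at z)" using D2 ty zr by auto
      have "L * (\<bar>z - \<xi>0\<bar> + T) \<le> L * (Y + T)" using zz L0 by (simp add: mult_left_mono)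
      then show "\<bar>Gxx t z - a\<bar> \<le> L * (Y + T)" using LC[OF zr] by linarith
    qed
    then show ?thesis by simp
  qed
  have Y1: "Y \<le> 1" "0 \<le> Y" "0 \<le> T" using ty r unfolding Y_def T_def by auto
  have yy: "y^2 = Y^2" unfolding Y_def by simp
  have h2: "\<bar>Gx t \<xi>0 * y\<bar> \<le> L * T * Y"
    using LB Y1 unfolding Y_def by (simp add: abs_mult mult_right_mono)
  have "Y * Y \<le> 1 * Y" using Y1 by (intro mult_right_mono) auto
  then have h4: "T * Y^2 \<le> T * Y"
    using Y1 by (simp add: mult_left_mono power2_eq_square)
  have h5: "L * (T * Y^2) \<le> L * (T * Y)" using h4 L0 by (simp add: mult_left_mono)
  have "(L * (Y + T))/2 * y^2 = L/2 * Y^3 + L/2 * (T * Y^2)"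
    unfolding yy by (simp add: algebra_simps power3_eq_cube power2_eq_square)
  then have R': "\<bar>U t (\<xi>0+y) - U t \<xi>0 - Gx t \<xi>0 * y - a/2 * y^2\<bar> \<le> L/2 * Y^3 + L/2 * (T * Y^2)"
    using R by simp
  have eq: "U t (\<xi>0 + y) - a * ((t - t0) + y^2/2) =
     (U t (\<xi>0+y) - U t \<xi>0 - Gx t \<xi>0 * y - a/2 * y^2) + (U t \<xi>0 - a * (t - t0)) + Gx t \<xi>0 * y"
    by (simp add: algebra_simps)
  have "\<bar>U t (\<xi>0 + y) - a * ((t - t0) + y^2/2)\<bar> \<le> L/2 * Y^3 + L/2 * (T * Y^2) + L/2 * T^2 + L * T * Y"
    unfolding eq using R' LA h2 by linarith
  also have "\<dots> \<le> 2*L*(T^2 + T*Y + Y^3)"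
  proof -
    have "0 \<le> L * T^2" "0 \<le> L * Y^3" "0 \<le> L * (T * Y)" using L0 Y1 by auto
    then show ?thesis using h5 by (simp add: algebra_simps)
  qed
  finally show "\<bar>U t (\<xi>0 + y) - a * ((t - t0) + y^2/2)\<bar> \<le> 2*L*((t-t0)^2 + \<bar>t-t0\<bar>*\<bar>y\<bar> + \<bar>y\<bar>^3)"
    unfolding T_def Y_def by simp
  have "\<bar>(Gx t (\<xi>0+y) - a * (\<xi>0+y)) - (Gx t \<xi>0 - a * \<xi>0)\<bar> \<le> (L * (Y + T)) * \<bar>(\<xi>0+y) - \<xi>0\<bar>"
  proof (rule lip1[of \<xi>0 "\<xi>0+y" "\<lambda>z. Gx t z - a * z" "\<lambda>z. Gxx t z - a"])
    fix z assume z: "min \<xi>0 (\<xi>0 + y) \<le> z" "z \<le> max \<xi>0 (\<xi>0 + y)"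
    then have zz: "\<bar>z - \<xi>0\<bar> \<le> Y" unfolding Y_def by (auto simp: min_def max_def split: if_splits)
    then have zr: "\<bar>z - \<xi>0\<bar> \<le> r" using ty Y_def by simp
    show "((\<lambda>z. Gx t z - a * z) has_real_derivative Gxx t z - a) (at z)"
      using D2[OF ty(1) zr] by (auto intro!: derivative_eq_intros)
    have "L * (\<bar>z - \<xi>0\<bar> + T) \<le> L * (Y + T)" using zz L0 by (simp add: mult_left_mono)
    then show "\<bar>Gxx t z - a\<bar> \<le> L * (Y + T)" using LC[OF zr] by linarith
  qed
  then have "\<bar>Gx t (\<xi>0+y) - Gx t \<xi>0 - a * y\<bar> \<le> L * Y^2 + L * (T * Y)"
    unfolding Y_def by (simp add: algebra_simps power2_eq_square)
  moreover have "L * (T * Y) \<le> L * (T * 1)" using Y1 L0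
    by (intro mult_left_mono) auto
  ultimately show "\<bar>Gx t (\<xi>0 + y) - a * y\<bar> \<le> 2*L*\<bar>t-t0\<bar> + L*y^2"
    using LB unfolding T_def yy by linarith
qed


lemma sfacts:
  fixes s K \<epsilon> :: real
  assumes "0<s" "s < \<epsilon>^2/8" "s < 1/K^2" "0<K" "0<\<epsilon>" "\<epsilon>\<le>1"
  shows "0 < sqrt(2* s)" "(sqrt(2* s))^2 = 2* s" "K* s < sqrt(2* s)" "2* sqrt(2* s) < \<epsilon>" "s \<le> sqrt(2* s)"
proof -
  show "0 < sqrt(2* s)" "(sqrt(2* s))^2 = 2* s" using assms by auto
  have "K^2 * s < 1" using assms by (simp add: field_simps)
  then have "(K^2 * s) * s < 1 * s" using assms by (intro mult_strict_right_mono) auto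
  then have "(K* s)^2 < 2* s" using assms by (simp add: power2_eq_square algebra_simps)
  then show "K* s < sqrt(2* s)" by (rule real_less_rsqrt)
  have "sqrt (2* s) < \<epsilon>/2" apply (rule real_less_lsqrt) using assms by (auto simp: power2_eq_square)
  then show "2* sqrt(2* s) < \<epsilon>" by simp
  have "\<epsilon>^2 \<le> 1" using assms by (simp add: power_le_one)
  then have "s \<le> 2" using assms by simp
  then have "s * s \<le> 2 * s" using assms by (intro mult_right_mono) auto
  then have "s^2 \<le> 2* s" by (simp add: power2_eq_square)
  then show "s \<le> sqrt(2* s)" by (rule real_le_rsqrt)
qed

lemma signs:
  fixes s q K M a V y :: real
  assumes "0<s" "0<q" "q^2 = 2* s" "K* s \<le> q" "0 \<le> M" "a \<noteq> 0" "K = 40*(M+1)/\<bar>a\<bar>"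
   and E: "\<bar>V - a*(y^2/2 - s)\<bar> \<le> 19*M* s*q"
  shows "y = q + K* s \<or> y = -(q+K* s) \<Longrightarrow> a*V > 0"
    and "y = q - K* s \<or> y = -(q - K* s) \<Longrightarrow> a*V < 0"
proof -
  define A where "A = \<bar>a\<bar>"
  have A0: "A > 0" using assms A_def by auto
  have aa: "a*a = A*A" unfolding A_def by (simp add: abs_mult_self_eq)
  have AK: "A*K = 40*(M+1)" using A0 assms(7) unfolding A_def by (simp add: field_simps)
  have "a*a*K = A*(A*K)" using aa by (simp add: algebra_simps)
  then have aK: "a*a*K = 40*(M+1)*A" using AK by simp
  have K0: "0 \<le> K" using assms(5,7) by simp
  have P0: "0 < s*q" using assms by simp
  have e: "\<bar>a*(V - a*(y^2/2 - s))\<bar> \<le> A*(19*M* s*q)"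
    using E A0 unfolding A_def abs_mult by (intro mult_left_mono) auto
  have decomp: "a*V = a*a*(y^2/2 - s) + a*(V - a*(y^2/2 - s))" by (simp add: algebra_simps)
  have aa0: "0 \<le> a*a" by simp
  show "a*V > 0" if y: "y = q + K* s \<or> y = -(q+K* s)"
  proof -
    have "y^2 = (q + K* s)^2" using y by (metis power2_minus)
    then have "y^2/2 - s = K* s*q + (K* s)^2/2" using assms(3) by (simp add: power2_eq_square algebra_simps)
    then have "y^2/2 - s \<ge> K*(s*q)" by simp
    then have "a*a*(y^2/2 - s) \<ge> a*a*(K*(s*q))" using aa0 by (rule mult_left_mono)
    also have "a*a*(K*(s*q)) = (a*a*K)*(s*q)" by (simp only: mult.assoc)
    also have "\<dots> = 40*(M+1)*A*(s*q)" by (simp only: aK)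
    finally have "a*a*(y^2/2 - s) \<ge> 40*(M+1)*A*(s*q)" .
    moreover have "A*(19*M* s*q) = 19*M*A*(s*q)" by (simp add: algebra_simps)
    moreover have "19*M*A*(s*q) < 40*(M+1)*A*(s*q)" using A0 P0 assms(5)
      by (intro mult_strict_right_mono) auto
    ultimately show ?thesis using decomp e by linarith
  qed
  show "a*V < 0" if y: "y = q - K* s \<or> y = -(q-K* s)"
  proof -
    have "y^2 = (q - K* s)^2" using y by (metis power2_minus)
    then have "y^2/2 - s = -K* s*q + (K* s)^2/2" using assms(3) by (simp add: power2_eq_square algebra_simps)
    moreover have "(K* s)*(K* s) \<le> (K* s) * q" using assms(4) K0 \<open>0 < s\<close> by (intro mult_left_mono) auto
    ultimately have "y^2/2 - s \<le> -(K/2)*(s*q)" by (simp add: power2_eq_square algebra_simps)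
    then have "a*a*(y^2/2 - s) \<le> a*a*(-(K/2)*(s*q))" using aa0 by (rule mult_left_mono)
    also have "a*a*(-(K/2)*(s*q)) = -((a*a*K)*(s*q))/2" by (simp add: algebra_simps)
    also have "\<dots> = -20*(M+1)*A*(s*q)" by (simp only: aK)
    finally have "a*a*(y^2/2 - s) \<le> -20*(M+1)*A*(s*q)" .
    moreover have "A*(19*M* s*q) = 19*M*A*(s*q)" by (simp add: algebra_simps)
    moreover have "19*M*A*(s*q) < 20*(M+1)*A*(s*q)" using A0 P0 assms(5)
      by (intro mult_strict_right_mono) auto
    ultimately show ?thesis using decomp e by linarith
  qed
qed


lemma final:
  fixes U Gx :: "real \<Rightarrow> real \<Rightarrow> real" and a t0 \<xi>0 r M :: real
  assumes r: "0 < r" "r \<le> 1" and a0: "a \<noteq> 0" and M0: "0 \<le> M"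
   and cont: "\<And>t x. \<bar>t - t0\<bar> \<le> r \<Longrightarrow> \<bar>x - \<xi>0\<bar> \<le> r \<Longrightarrow> isCont (\<lambda>y. U t y) x"
   and E1: "\<And>t y. \<bar>t - t0\<bar> \<le> r \<Longrightarrow> \<bar>y\<bar> \<le> r \<Longrightarrow>
      \<bar>U t (\<xi>0 + y) - a * ((t - t0) + y^2/2)\<bar> \<le> M * ((t-t0)^2 + \<bar>t-t0\<bar>*\<bar>y\<bar> + \<bar>y\<bar>^3)"
   and E2: "\<And>t y. \<bar>t - t0\<bar> \<le> r \<Longrightarrow> \<bar>y\<bar> \<le> r \<Longrightarrow> \<bar>Gx t (\<xi>0 + y) - a * y\<bar> \<le> M * \<bar>t-t0\<bar> + M * y^2"
  shows "\<exists>\<delta> \<epsilon> \<xi>1 \<xi>2. \<delta> > 0 \<and> \<epsilon> > 0 \<and>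
     (\<forall>t. t0 - \<delta> < t \<and> t < t0 \<longrightarrow>
        U t (\<xi>1 t) = 0 \<and> U t (\<xi>2 t) = 0 \<and> \<bar>\<xi>1 t - \<xi>0\<bar> < \<epsilon> \<and> \<bar>\<xi>2 t - \<xi>0\<bar> < \<epsilon>) \<and>
     (\<lambda>t. \<xi>1 t - \<xi>0 - sqrt (2 * (t0 - t))) \<in> O[at_left t0](\<lambda>t. t0 - t) \<and>
     (\<lambda>t. \<xi>2 t - \<xi>0 + sqrt (2 * (t0 - t))) \<in> O[at_left t0](\<lambda>t. t0 - t) \<and>
     (\<lambda>t. Gx t (\<xi>1 t) - sqrt (2 * (t0 - t)) * a) \<in> O[at_left t0](\<lambda>t. t0 - t) \<and>
     (\<lambda>t. Gx t (\<xi>2 t) + sqrt (2 * (t0 - t)) * a) \<in> O[at_left t0](\<lambda>t. t0 - t) \<and>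
     (\<forall>t x. t0 < t \<and> t < t0 + \<delta> \<and> \<bar>x - \<xi>0\<bar> < \<epsilon> \<longrightarrow> U t x \<noteq> 0)"
proof -
  define \<epsilon> where "\<epsilon> = min r (\<bar>a\<bar>/(4*(M+1)))"
  define K where "K = 40*(M+1)/\<bar>a\<bar>"
  define \<delta> where "\<delta> = min (\<epsilon>^2/8) (1/K^2)"
  have e0: "0 < \<epsilon>" "\<epsilon> \<le> r" "\<epsilon> \<le> 1" "\<epsilon> \<le> \<bar>a\<bar>/(4*(M+1))"
    using r a0 M0 unfolding \<epsilon>_def by auto
  have K0: "0 < K" using a0 M0 unfolding K_def by auto
  have d0: "0 < \<delta>" using e0 K0 unfolding \<delta>_def by auto
  have "\<epsilon> * \<epsilon> \<le> 1 * \<epsilon>" using e0 by (intro mult_right_mono) auto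
  then have ee: "\<epsilon> * \<epsilon> \<le> \<epsilon>" by simp
  have "\<delta> \<le> \<epsilon> * \<epsilon> / 8" unfolding \<delta>_def by (simp add: power2_eq_square)
  then have de: "\<delta> \<le> \<epsilon>" using ee e0 by linarith
  have CL: "\<bar>U (t0 - s) (\<xi>0+y) - a*(y^2/2 - s)\<bar> \<le> 19*M* s * sqrt(2* s)"
    if s: "0 < s" "s < \<delta>" and y: "\<bar>y\<bar> \<le> 2 * sqrt (2 * s)" for s y
  proof -
    define q where "q = sqrt (2 * s)"
    have sf: "0 < q" "q^2 = 2 * s" "K * s < q" "2 * q < \<epsilon>" "s \<le> q"
      using sfacts[of s \<epsilon> K] s e0 K0 unfolding q_def \<delta>_def by auto
    have yq: "\<bar>y\<bar> \<le> 2 * q" using y q_def by simp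
    have sr: "\<bar>(t0 - s) - t0\<bar> \<le> r" using s de e0 by auto
    have yr: "\<bar>y\<bar> \<le> r" using yq sf e0 by auto
    have E: "\<bar>U (t0 - s) (\<xi>0 + y) - a * (((t0 - s) - t0) + y^2/2)\<bar>
        \<le> M * (((t0 - s)-t0)^2 + \<bar>(t0 - s)-t0\<bar>*\<bar>y\<bar> + \<bar>y\<bar>^3)" by (rule E1[OF sr yr])
    have f1: "s * s \<le> s * q" using sf s by (intro mult_left_mono) auto
    have "s * \<bar>y\<bar> \<le> s * (2 * q)" using yq s by (intro mult_left_mono) auto
    then have f2: "s * \<bar>y\<bar> \<le> 2 * (s * q)" by (simp add: algebra_simps)
    have f3: "\<bar>y\<bar>^3 \<le> (2 * q)^3" using yq by (intro power_mono) auto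
    have f4: "(2 * q)^3 = 16 * (s * q)" using sf(2) by (simp add: power3_eq_cube power2_eq_square algebra_simps)
    have f5: "((t0 - s)-t0)^2 = s * s" "\<bar>(t0 - s)-t0\<bar> = s" using s by (auto simp: power2_eq_square)
    have "((t0 - s)-t0)^2 + \<bar>(t0 - s)-t0\<bar>*\<bar>y\<bar> + \<bar>y\<bar>^3 \<le> 19 * (s * q)"
      unfolding f5 using f1 f2 f3 f4 by linarith
    then have "((t0 - s)-t0)^2 + \<bar>(t0 - s)-t0\<bar>*\<bar>y\<bar> + \<bar>y\<bar>^3 \<le> 19 * s * q" by (simp add: mult.assoc)
    then have "M * (((t0 - s)-t0)^2 + \<bar>(t0 - s)-t0\<bar>*\<bar>y\<bar> + \<bar>y\<bar>^3) \<le> M * (19 * s * q)"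
      using M0 by (rule mult_left_mono)
    moreover have "a * (((t0 - s) - t0) + y^2/2) = a*(y^2/2 - s)" by simp
    ultimately show ?thesis using E unfolding q_def by (simp add: algebra_simps)
  qed
  have contI: "continuous_on {lo..hi} (\<lambda>x. a * U t x)"
    if "\<bar>t - t0\<bar> \<le> r" "\<And>x. lo \<le> x \<Longrightarrow> x \<le> hi \<Longrightarrow> \<bar>x - \<xi>0\<bar> \<le> r" for t lo hi
    apply (rule continuous_at_imp_continuous_on)
    using cont that by (auto intro!: continuous_intros)
  have ex1: "\<exists>x. \<bar>x - \<xi>0 - sqrt(2*(t0-t))\<bar> \<le> K*(t0-t) \<and> U t x = 0"
    if t: "t0 - \<delta> < t" "t < t0" for t
  proof -
    define s where "s = t0 - t"
    define q where "q = sqrt (2 * s)"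
    have s0: "0 < s" "s < \<delta>" using t s_def by auto
    have sf: "0 < q" "q^2 = 2 * s" "K * s < q" "2 * q < \<epsilon>" "s \<le> q"
      using sfacts[of s \<epsilon> K] s0 e0 K0 unfolding q_def \<delta>_def by auto
    have tt: "t = t0 - s" using s_def by simp
    have Ks: "0 < K * s" using K0 s0 by simp
    have Kq: "K * s \<le> q" using sf by simp
    have yb1: "\<bar>q - K * s\<bar> \<le> 2 * sqrt (2 * s)" using sf Ks q_def by auto
    have yb2: "\<bar>q + K * s\<bar> \<le> 2 * sqrt (2 * s)" using sf Ks q_def by auto
    have c1: "\<bar>U t (\<xi>0 + (q - K * s)) - a*((q - K * s)^2/2 - s)\<bar> \<le> 19*M* s * q"
      using CL[OF s0 yb1] by (simp add: q_def tt)
    have c2: "\<bar>U t (\<xi>0 + (q + K * s)) - a*((q + K * s)^2/2 - s)\<bar> \<le> 19*M* s * q"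
      using CL[OF s0 yb2] by (simp add: q_def tt)
    have neg: "a * U t (\<xi>0 + (q - K * s)) < 0"
      by (rule signs(2)[OF s0(1) sf(1) sf(2) Kq M0 a0 K_def c1]) simp
    have pos: "a * U t (\<xi>0 + (q + K * s)) > 0"
      by (rule signs(1)[OF s0(1) sf(1) sf(2) Kq M0 a0 K_def c2]) simp
    have cI: "continuous_on {\<xi>0 + (q - K * s)..\<xi>0 + (q + K * s)} (\<lambda>x. a * U t x)"
      apply (rule contI)
      using s0 de e0 sf Ks unfolding tt by auto
    obtain x where x: "\<xi>0 + (q - K * s) \<le> x" "x \<le> \<xi>0 + (q + K * s)" "a * U t x = 0"
      using IVT'[of "\<lambda>x. a * U t x" "\<xi>0 + (q - K * s)" 0 "\<xi>0 + (q + K * s)", OF _ _ _ cI] neg pos Ks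
      by auto
    show ?thesis
      apply (rule exI[of _ x])
      using x a0 unfolding s_def[symmetric] q_def[symmetric] by auto
  qed
  have ex2: "\<exists>x. \<bar>x - \<xi>0 + sqrt(2*(t0-t))\<bar> \<le> K*(t0-t) \<and> U t x = 0"
    if t: "t0 - \<delta> < t" "t < t0" for t
  proof -
    define s where "s = t0 - t"
    define q where "q = sqrt (2 * s)"
    have s0: "0 < s" "s < \<delta>" using t s_def by auto
    have sf: "0 < q" "q^2 = 2 * s" "K * s < q" "2 * q < \<epsilon>" "s \<le> q"
      using sfacts[of s \<epsilon> K] s0 e0 K0 unfolding q_def \<delta>_def by auto
    have tt: "t = t0 - s" using s_def by simp
    have Ks: "0 < K * s" using K0 s0 by simp
    have Kq: "K * s \<le> q" using sf by simp
    have yb1: "\<bar>-(q - K * s)\<bar> \<le> 2 * sqrt (2 * s)" using sf Ks q_def by auto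
    have yb2: "\<bar>-(q + K * s)\<bar> \<le> 2 * sqrt (2 * s)" using sf Ks q_def by auto
    have c1: "\<bar>U t (\<xi>0 + (-(q - K * s))) - a*((-(q - K * s))^2/2 - s)\<bar> \<le> 19*M* s * q"
      using CL[OF s0 yb1] by (simp add: q_def tt)
    have c2: "\<bar>U t (\<xi>0 + (-(q + K * s))) - a*((-(q + K * s))^2/2 - s)\<bar> \<le> 19*M* s * q"
      using CL[OF s0 yb2] by (simp add: q_def tt)
    have neg: "a * U t (\<xi>0 + (-(q - K * s))) < 0"
      by (rule signs(2)[OF s0(1) sf(1) sf(2) Kq M0 a0 K_def c1]) simp
    have pos: "a * U t (\<xi>0 + (-(q + K * s))) > 0"
      by (rule signs(1)[OF s0(1) sf(1) sf(2) Kq M0 a0 K_def c2]) simp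
    have cI: "continuous_on {\<xi>0 + -(q + K * s)..\<xi>0 + -(q - K * s)} (\<lambda>x. a * U t x)"
      apply (rule contI)
      using s0 de e0 sf Ks unfolding tt by auto
    obtain x where x: "\<xi>0 + -(q + K * s) \<le> x" "x \<le> \<xi>0 + -(q - K * s)" "a * U t x = 0"
      using IVT2'[of "\<lambda>x. a * U t x" "\<xi>0 + -(q - K * s)" 0 "\<xi>0 + -(q + K * s)", OF _ _ _ cI] neg pos Ks
      by auto
    show ?thesis
      apply (rule exI[of _ x])
      using x a0 unfolding s_def[symmetric] q_def[symmetric] by auto
  qed
  define \<xi>1 where "\<xi>1 = (\<lambda>t. SOME x. \<bar>x - \<xi>0 - sqrt(2*(t0-t))\<bar> \<le> K*(t0-t) \<and> U t x = 0)"
  define \<xi>2 where "\<xi>2 = (\<lambda>t. SOME x. \<bar>x - \<xi>0 + sqrt(2*(t0-t))\<bar> \<le> K*(t0-t) \<and> U t x = 0)"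
  have P1: "\<bar>\<xi>1 t - \<xi>0 - sqrt(2*(t0-t))\<bar> \<le> K*(t0-t) \<and> U t (\<xi>1 t) = 0"
    if "t0 - \<delta> < t" "t < t0" for t
    unfolding \<xi>1_def by (rule someI_ex[OF ex1[OF that]])
  have P2: "\<bar>\<xi>2 t - \<xi>0 + sqrt(2*(t0-t))\<bar> \<le> K*(t0-t) \<and> U t (\<xi>2 t) = 0"
    if "t0 - \<delta> < t" "t < t0" for t
    unfolding \<xi>2_def by (rule someI_ex[OF ex2[OF that]])
  have Q: "\<bar>\<xi>1 t - \<xi>0\<bar> < \<epsilon> \<and> \<bar>\<xi>2 t - \<xi>0\<bar> < \<epsilon> \<and>
      \<bar>Gx t (\<xi>1 t) - sqrt (2 * (t0 - t)) * a\<bar> \<le> (9*M + \<bar>a\<bar>*K) * (t0 - t) \<and>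
      \<bar>Gx t (\<xi>2 t) + sqrt (2 * (t0 - t)) * a\<bar> \<le> (9*M + \<bar>a\<bar>*K) * (t0 - t)"
    if t: "t0 - \<delta> < t" "t < t0" for t
  proof -
    define s where "s = t0 - t"
    define q where "q = sqrt (2 * s)"
    have s0: "0 < s" "s < \<delta>" using t s_def by auto
    have sf: "0 < q" "q^2 = 2 * s" "K * s < q" "2 * q < \<epsilon>" "s \<le> q"
      using sfacts[of s \<epsilon> K] s0 e0 K0 unfolding q_def \<delta>_def by auto
    have tr: "\<bar>t - t0\<bar> \<le> r" using s0 de e0 s_def by auto
    have gen: "\<bar>y\<bar> < \<epsilon> \<and> \<bar>Gx t (\<xi>0 + y) - a * y\<bar> \<le> 9 * M * s"
      if y: "\<bar>y\<bar> \<le> 2 * q" for y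
    proof -
      have yr: "\<bar>y\<bar> \<le> r" using y sf e0 by auto
      have "y^2 = \<bar>y\<bar>^2" by simp
      also have "\<dots> \<le> (2*q)^2" using y by (intro power_mono) auto
      also have "\<dots> = 8 * s" using sf(2) by (simp add: power2_eq_square algebra_simps)
      finally have "M * y^2 \<le> M * (8 * s)" using M0 by (intro mult_left_mono) auto
      moreover have "\<bar>t - t0\<bar> = s" using s_def s0 by auto
      ultimately show ?thesis using E2[OF tr yr] y sf by auto
    qed
    have b1: "\<bar>(\<xi>1 t - \<xi>0) - q\<bar> \<le> K * s" using P1[OF t] unfolding s_def q_def by simp
    have b2: "\<bar>(\<xi>2 t - \<xi>0) + q\<bar> \<le> K * s" using P2[OF t] unfolding s_def q_def by simp
    have y1: "\<bar>\<xi>1 t - \<xi>0\<bar> \<le> 2 * q" using b1 sf by auto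
    have y2: "\<bar>\<xi>2 t - \<xi>0\<bar> \<le> 2 * q" using b2 sf by auto
    have g1: "\<bar>Gx t (\<xi>1 t) - a * (\<xi>1 t - \<xi>0)\<bar> \<le> 9 * M * s" "\<bar>\<xi>1 t - \<xi>0\<bar> < \<epsilon>"
      using gen[OF y1] by auto
    have g2: "\<bar>Gx t (\<xi>2 t) - a * (\<xi>2 t - \<xi>0)\<bar> \<le> 9 * M * s" "\<bar>\<xi>2 t - \<xi>0\<bar> < \<epsilon>"
      using gen[OF y2] by auto
    have h1: "\<bar>a * (\<xi>1 t - \<xi>0) - q * a\<bar> \<le> \<bar>a\<bar> * (K * s)"
    proof -
      have "\<bar>a * (\<xi>1 t - \<xi>0) - q * a\<bar> = \<bar>a\<bar> * \<bar>(\<xi>1 t - \<xi>0) - q\<bar>"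
        by (simp add: abs_mult[symmetric] algebra_simps)
      then show ?thesis using b1 by (simp add: mult_left_mono)
    qed
    have h2: "\<bar>a * (\<xi>2 t - \<xi>0) + q * a\<bar> \<le> \<bar>a\<bar> * (K * s)"
    proof -
      have "\<bar>a * (\<xi>2 t - \<xi>0) + q * a\<bar> = \<bar>a\<bar> * \<bar>(\<xi>2 t - \<xi>0) + q\<bar>"
        by (simp add: abs_mult[symmetric] algebra_simps)
      then show ?thesis using b2 by (simp add: mult_left_mono)
    qed
    have eqn: "(9*M + \<bar>a\<bar>*K) * s = 9 * M * s + \<bar>a\<bar> * (K * s)" by (simp add: algebra_simps)
    have t1: "\<bar>Gx t (\<xi>1 t) - q * a\<bar> \<le> \<bar>Gx t (\<xi>1 t) - a * (\<xi>1 t - \<xi>0)\<bar> + \<bar>a * (\<xi>1 t - \<xi>0) - q * a\<bar>"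
      using abs_triangle_ineq[of "Gx t (\<xi>1 t) - a * (\<xi>1 t - \<xi>0)" "a * (\<xi>1 t - \<xi>0) - q * a"] by simp
    have t2: "\<bar>Gx t (\<xi>2 t) + q * a\<bar> \<le> \<bar>Gx t (\<xi>2 t) - a * (\<xi>2 t - \<xi>0)\<bar> + \<bar>a * (\<xi>2 t - \<xi>0) + q * a\<bar>"
      using abs_triangle_ineq[of "Gx t (\<xi>2 t) - a * (\<xi>2 t - \<xi>0)" "a * (\<xi>2 t - \<xi>0) + q * a"] by simp
    have "\<bar>Gx t (\<xi>1 t) - q * a\<bar> \<le> 9 * M * s + \<bar>a\<bar> * (K * s)" using t1 g1 h1 by linarith
    moreover have "\<bar>Gx t (\<xi>2 t) + q * a\<bar> \<le> 9 * M * s + \<bar>a\<bar> * (K * s)" using t2 g2 h2 by linarith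
    ultimately show ?thesis using g1 g2 unfolding s_def[symmetric] q_def[symmetric] eqn by blast
  qed
  have ev: "eventually (\<lambda>t. t \<in> {t0 - \<delta><..<t0}) (at_left t0)"
    using d0 by (intro eventually_at_left_real) auto
  have O1: "(\<lambda>t. \<xi>1 t - \<xi>0 - sqrt (2 * (t0 - t))) \<in> O[at_left t0](\<lambda>t. t0 - t)"
    by (rule bigoI[where c = K], rule eventually_mono[OF ev]) (use P1 in auto)
  have O2: "(\<lambda>t. \<xi>2 t - \<xi>0 + sqrt (2 * (t0 - t))) \<in> O[at_left t0](\<lambda>t. t0 - t)"
    by (rule bigoI[where c = K], rule eventually_mono[OF ev]) (use P2 in auto)
  have O3: "(\<lambda>t. Gx t (\<xi>1 t) - sqrt (2 * (t0 - t)) * a) \<in> O[at_left t0](\<lambda>t. t0 - t)"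
    by (rule bigoI[where c = "9*M + \<bar>a\<bar>*K"], rule eventually_mono[OF ev]) (use Q in auto)
  have O4: "(\<lambda>t. Gx t (\<xi>2 t) + sqrt (2 * (t0 - t)) * a) \<in> O[at_left t0](\<lambda>t. t0 - t)"
    by (rule bigoI[where c = "9*M + \<bar>a\<bar>*K"], rule eventually_mono[OF ev]) (use Q in auto)
  have NZ: "U t x \<noteq> 0" if t: "t0 < t" "t < t0 + \<delta>" "\<bar>x - \<xi>0\<bar> < \<epsilon>" for t x
  proof
    assume U0: "U t x = 0"
    define T where "T = t - t0"
    define y where "y = x - \<xi>0"
    have T0: "0 < T" "T < \<epsilon>" using t de unfolding T_def by auto
    have ye: "\<bar>y\<bar> < \<epsilon>" using t y_def by auto
    have tr: "\<bar>t - t0\<bar> \<le> r" using T0 e0 T_def by auto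
    have yr: "\<bar>y\<bar> \<le> r" using ye e0 by auto
    have E: "\<bar>U t (\<xi>0 + y) - a * ((t - t0) + y^2/2)\<bar> \<le> M * ((t-t0)^2 + \<bar>t-t0\<bar>*\<bar>y\<bar> + \<bar>y\<bar>^3)"
      by (rule E1[OF tr yr])
    have xx: "\<xi>0 + y = x" using y_def by simp
    have "T * T \<le> \<epsilon> * T" using T0 by (intro mult_right_mono) auto
    moreover have "T * \<bar>y\<bar> \<le> T * \<epsilon>" using T0 ye by (intro mult_left_mono) auto
    moreover have "\<bar>y\<bar> * y^2 \<le> \<epsilon> * y^2" using ye by (intro mult_right_mono) auto
    moreover have "\<bar>y\<bar>^3 = \<bar>y\<bar> * y^2" by (simp add: power3_eq_cube power2_eq_square abs_mult_self_eq)
    ultimately have "(t-t0)^2 + \<bar>t-t0\<bar>*\<bar>y\<bar> + \<bar>y\<bar>^3 \<le> \<epsilon> * (2 * (T + y^2/2))"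
      using T0 unfolding T_def by (simp add: power2_eq_square algebra_simps)
    then have "M * ((t-t0)^2 + \<bar>t-t0\<bar>*\<bar>y\<bar> + \<bar>y\<bar>^3) \<le> M * (\<epsilon> * (2 * (T + y^2/2)))"
      using M0 by (rule mult_left_mono)
    moreover have W0: "0 < T + y^2/2" using T0 by (simp add: add_pos_nonneg)
    moreover have "M * \<epsilon> * 2 < \<bar>a\<bar>"
    proof -
      have "(M+1) * \<epsilon> \<le> (M+1) * (\<bar>a\<bar>/(4*(M+1)))" using e0 M0 by (intro mult_left_mono) auto
      also have "\<dots> = \<bar>a\<bar>/4" using M0 by (simp add: field_simps)
      finally have "(M+1) * \<epsilon> \<le> \<bar>a\<bar>/4" .
      moreover have "M * \<epsilon> \<le> (M+1) * \<epsilon>" using e0 by (intro mult_right_mono) auto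
      ultimately show ?thesis using a0 by linarith
    qed
    moreover have "M * (\<epsilon> * (2 * (T + y^2/2))) = (M * \<epsilon> * 2) * (T + y^2/2)" by (simp add: algebra_simps)
    ultimately have "M * ((t-t0)^2 + \<bar>t-t0\<bar>*\<bar>y\<bar> + \<bar>y\<bar>^3) < \<bar>a\<bar> * (T + y^2/2)"
      using mult_strict_right_mono[of "M * \<epsilon> * 2" "\<bar>a\<bar>" "T + y^2/2"] by linarith
    moreover have "\<bar>a * ((t - t0) + y^2/2)\<bar> = \<bar>a\<bar> * (T + y^2/2)"
      using W0 unfolding T_def by (simp add: abs_mult)
    ultimately show False using E U0 xx by auto
  qed
  have A1: "\<forall>t. t0 - \<delta> < t \<and> t < t0 \<longrightarrow>
        U t (\<xi>1 t) = 0 \<and> U t (\<xi>2 t) = 0 \<and> \<bar>\<xi>1 t - \<xi>0\<bar> < \<epsilon> \<and> \<bar>\<xi>2 t - \<xi>0\<bar> < \<epsilon>"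
    using P1 P2 Q by blast
  have A2: "\<forall>t x. t0 < t \<and> t < t0 + \<delta> \<and> \<bar>x - \<xi>0\<bar> < \<epsilon> \<longrightarrow> U t x \<noteq> 0" using NZ by blast
  show ?thesis
    apply (rule exI[of _ \<delta>], rule exI[of _ \<epsilon>], rule exI[of _ \<xi>1], rule exI[of _ \<xi>2])
    using d0 e0(1) A1 A2 O1 O2 O3 O4 by blast
qed


theorem proposition4p1:
  fixes f u0 :: "real \<Rightarrow> real" and u :: "real \<Rightarrow> real \<Rightarrow> real" and t0 \<xi>0 :: real
  assumes f_smooth: "smooth_real f"
    and f'0: "deriv f 0 = 0"
    and u0_smooth: "smooth_real u0"
    and u0_bdd: "\<forall>n. bounded (range ((deriv ^^ n) u0))"
    and u_smooth: "smooth_on2 ({0<..} \<times> UNIV) (\<lambda>(t, x). u t x)"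
    and u_cont0: "continuous_on ({0..} \<times> UNIV) (\<lambda>(t, x). u t x)"
    and u_init: "\<forall>x. u 0 x = u0 x"
    and pde: "\<forall>t x. t > 0 \<longrightarrow>
       deriv (\<lambda>s. u s x) t =
         deriv (\<lambda>y. deriv (\<lambda>z. u t z) y) x + deriv f (u t x) * deriv (\<lambda>y. u t y) x"
    and t0_pos: "t0 > 0"
    and root: "u t0 \<xi>0 = 0"
    and crit: "deriv (\<lambda>y. u t0 y) \<xi>0 = 0"
    and nondeg: "deriv (\<lambda>y. deriv (\<lambda>z. u t0 z) y) \<xi>0 \<noteq> 0"
  shows "\<exists>\<delta> \<epsilon> \<xi>1 \<xi>2. \<delta> > 0 \<and> \<epsilon> > 0 \<and>
     (\<forall>t. t0 - \<delta> < t \<and> t < t0 \<longrightarrow>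
        u t (\<xi>1 t) = 0 \<and> u t (\<xi>2 t) = 0 \<and> \<bar>\<xi>1 t - \<xi>0\<bar> < \<epsilon> \<and> \<bar>\<xi>2 t - \<xi>0\<bar> < \<epsilon>) \<and>
     (\<lambda>t. \<xi>1 t - \<xi>0 - sqrt (2 * (t0 - t))) \<in> O[at_left t0](\<lambda>t. t0 - t) \<and>
     (\<lambda>t. \<xi>2 t - \<xi>0 + sqrt (2 * (t0 - t))) \<in> O[at_left t0](\<lambda>t. t0 - t) \<and>
     (\<lambda>t. deriv (\<lambda>y. u t y) (\<xi>1 t)
            - sqrt (2 * (t0 - t)) * deriv (\<lambda>y. deriv (\<lambda>z. u t0 z) y) \<xi>0)
        \<in> O[at_left t0](\<lambda>t. t0 - t) \<and>
     (\<lambda>t. deriv (\<lambda>y. u t y) (\<xi>2 t)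
            + sqrt (2 * (t0 - t)) * deriv (\<lambda>y. deriv (\<lambda>z. u t0 z) y) \<xi>0)
        \<in> O[at_left t0](\<lambda>t. t0 - t) \<and>
     (\<forall>t x. t0 < t \<and> t < t0 + \<delta> \<and> \<bar>x - \<xi>0\<bar> < \<epsilon> \<longrightarrow> u t x \<noteq> 0)"
proof -
  define a where "a = deriv (\<lambda>y. deriv (\<lambda>z. u t0 z) y) \<xi>0"
  define g where "g = (\<lambda>(t::real, x::real). u t x)"
  define S where "S = ({0<..} \<times> UNIV :: (real \<times> real) set)"
  have SM: "\<And>ds. continuous_on S (fold pd ds g)"
    and SMt: "\<And>ds t x. 0 < t \<Longrightarrow>
       ((\<lambda>s. fold pd ds g (s, x)) has_real_derivative pd True (fold pd ds g) (t, x)) (at t)"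
    and SMx: "\<And>ds t x. 0 < t \<Longrightarrow>
       ((\<lambda>y. fold pd ds g (t, y)) has_real_derivative pd False (fold pd ds g) (t, x)) (at x)"
    using u_smooth unfolding smooth_on2_def g_def[symmetric] S_def by auto
  define Gx where "Gx = (\<lambda>t x. pd False g (t, x))"
  define Gxx where "Gxx = (\<lambda>t x. pd False (pd False g) (t, x))"
  define Gxxx where "Gxxx = (\<lambda>t x. pd False (pd False (pd False g)) (t, x))"
  define Gxxt where "Gxxt = (\<lambda>t x. pd True (pd False (pd False g)) (t, x))"
  define Gt where "Gt = (\<lambda>t x. pd True g (t, x))"
  define Gtt where "Gtt = (\<lambda>t x. pd True (pd True g) (t, x))"
  define Gxt where "Gxt = (\<lambda>t x. pd True (pd False g) (t, x))"
  define r where "r = min 1 (t0/2)"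
  have r0: "0 < r" "r \<le> 1" using t0_pos r_def by auto
  have r2: "r \<le> t0/2" by (simp add: r_def)
  have tpos: "0 < t" if "\<bar>t - t0\<bar> \<le> r" for t using that r2 t0_pos by (auto simp: abs_le_iff)
  have gt: "g (t, x) = u t x" for t x by (simp add: g_def)
  have D1: "((\<lambda>y. u t y) has_real_derivative Gx t x) (at x)" if "\<bar>t-t0\<bar> \<le> r" "\<bar>x-\<xi>0\<bar> \<le> r" for t x
    using SMx[of t "[]" x] tpos[OF that(1)] by (simp add: Gx_def gt)
  have D2: "((\<lambda>y. Gx t y) has_real_derivative Gxx t x) (at x)" if "\<bar>t-t0\<bar> \<le> r" "\<bar>x-\<xi>0\<bar> \<le> r" for t x
    using SMx[of t "[False]" x] tpos[OF that(1)] by (simp add: Gx_def Gxx_def)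
  have D3: "((\<lambda>y. Gxx t y) has_real_derivative Gxxx t x) (at x)" if "\<bar>t-t0\<bar> \<le> r" "\<bar>x-\<xi>0\<bar> \<le> r" for t x
    using SMx[of t "[False, False]" x] tpos[OF that(1)] by (simp add: Gxxx_def Gxx_def)
  have D4: "((\<lambda>s. Gxx s x) has_real_derivative Gxxt t x) (at t)" if "\<bar>t-t0\<bar> \<le> r" "\<bar>x-\<xi>0\<bar> \<le> r" for t x
    using SMt[of t "[False, False]" x] tpos[OF that(1)] by (simp add: Gxxt_def Gxx_def)
  have D5: "((\<lambda>s. u s x) has_real_derivative Gt t x) (at t)" if "\<bar>t-t0\<bar> \<le> r" "\<bar>x-\<xi>0\<bar> \<le> r" for t x
    using SMt[of t "[]" x] tpos[OF that(1)] by (simp add: Gt_def gt)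
  have D6: "((\<lambda>s. Gt s x) has_real_derivative Gtt t x) (at t)" if "\<bar>t-t0\<bar> \<le> r" "\<bar>x-\<xi>0\<bar> \<le> r" for t x
    using SMt[of t "[True]" x] tpos[OF that(1)] by (simp add: Gt_def Gtt_def)
  have D7: "((\<lambda>s. Gx s x) has_real_derivative Gxt t x) (at t)" if "\<bar>t-t0\<bar> \<le> r" "\<bar>x-\<xi>0\<bar> \<le> r" for t x
    using SMt[of t "[False]" x] tpos[OF that(1)] by (simp add: Gx_def Gxt_def)
  define Bx where "Bx = {t0 - r..t0 + r} \<times> {\<xi>0 - r..\<xi>0 + r}"
  have cB: "compact Bx" unfolding Bx_def by (intro compact_Times compact_Icc)
  have BS: "Bx \<subseteq> S" unfolding Bx_def S_def using tpos by (auto simp: abs_le_iff)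
  have inB: "(t, x) \<in> Bx" if "\<bar>t-t0\<bar> \<le> r" "\<bar>x-\<xi>0\<bar> \<le> r" for t x
    using that unfolding Bx_def by (auto simp: abs_le_iff)
  obtain L1 where L1: "\<forall>p\<in>Bx. \<bar>fold pd [True, True] g p\<bar> \<le> L1"
    using cont_bound[OF continuous_on_subset[OF SM BS] cB] by blast
  obtain L2 where L2: "\<forall>p\<in>Bx. \<bar>fold pd [False, True] g p\<bar> \<le> L2"
    using cont_bound[OF continuous_on_subset[OF SM BS] cB] by blast
  obtain L3 where L3: "\<forall>p\<in>Bx. \<bar>fold pd [False, False, False] g p\<bar> \<le> L3"
    using cont_bound[OF continuous_on_subset[OF SM BS] cB] by blast
  obtain L4 where L4: "\<forall>p\<in>Bx. \<bar>fold pd [False, False, True] g p\<bar> \<le> L4"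
    using cont_bound[OF continuous_on_subset[OF SM BS] cB] by blast
  define L where "L = max (max L1 L2) (max L3 L4)"
  have B: "\<bar>Gtt t x\<bar> \<le> L \<and> \<bar>Gxt t x\<bar> \<le> L \<and> \<bar>Gxxx t x\<bar> \<le> L \<and> \<bar>Gxxt t x\<bar> \<le> L"
    if "\<bar>t-t0\<bar> \<le> r" "\<bar>x-\<xi>0\<bar> \<le> r" for t x
    using L1 L2 L3 L4 inB[OF that] unfolding L_def Gtt_def Gxt_def Gxxx_def Gxxt_def
    by (force simp: le_max_iff_disj)
  have V2: "Gx t0 \<xi>0 = 0" using crit by (simp add: Gx_def pd_def g_def)
  have V3: "Gxx t0 \<xi>0 = a" by (simp add: Gxx_def pd_def g_def a_def)
  have V4: "Gt t0 \<xi>0 = a"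
    using pde t0_pos root crit by (simp add: Gt_def pd_def g_def a_def)
  have L0: "0 \<le> L" using B[of t0 \<xi>0] r0 by auto
  have est1: "\<bar>u t (\<xi>0 + y) - a * ((t - t0) + y^2/2)\<bar> \<le> 2*L*((t-t0)^2 + \<bar>t-t0\<bar>*\<bar>y\<bar> + \<bar>y\<bar>^3)"
    if "\<bar>t - t0\<bar> \<le> r" "\<bar>y\<bar> \<le> r" for t y
    by (rule est(1)[of r t0 \<xi>0 u Gx Gxx Gxxx Gxxt Gt Gtt Gxt L a])
       (auto intro: r0 D1 D2 D3 D4 D5 D6 D7 root V2 V3 V4 that simp: B)
  have est2: "\<bar>Gx t (\<xi>0 + y) - a * y\<bar> \<le> 2*L*\<bar>t-t0\<bar> + L*y^2"
    if "\<bar>t - t0\<bar> \<le> r" "\<bar>y\<bar> \<le> r" for t y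
    by (rule est(2)[of r t0 \<xi>0 u Gx Gxx Gxxx Gxxt Gt Gtt Gxt L a])
       (auto intro: r0 D1 D2 D3 D4 D5 D6 D7 root V2 V3 V4 that simp: B)
  have E1: "\<bar>u t (\<xi>0 + y) - a * ((t - t0) + y^2/2)\<bar> \<le> (2*L) * ((t-t0)^2 + \<bar>t-t0\<bar>*\<bar>y\<bar> + \<bar>y\<bar>^3)"
    if "\<bar>t - t0\<bar> \<le> r" "\<bar>y\<bar> \<le> r" for t y
    using est1[OF that] by simp
  have E2: "\<bar>(\<lambda>t x. deriv (\<lambda>y. u t y) x) t (\<xi>0 + y) - a * y\<bar> \<le> (2*L) * \<bar>t-t0\<bar> + (2*L) * y^2"
    if "\<bar>t - t0\<bar> \<le> r" "\<bar>y\<bar> \<le> r" for t y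
  proof -
    have "Gx t (\<xi>0 + y) = deriv (\<lambda>y. u t y) (\<xi>0 + y)" by (simp add: Gx_def pd_def g_def)
    moreover have "L * y^2 \<le> (2*L) * y^2" using L0 by (intro mult_right_mono) auto
    ultimately show ?thesis using est2[OF that] by simp
  qed
  have cont: "isCont (\<lambda>y. u t y) x" if "\<bar>t - t0\<bar> \<le> r" "\<bar>x - \<xi>0\<bar> \<le> r" for t x
    using D1[OF that] by (rule DERIV_isCont)
  have a0: "a \<noteq> 0" using nondeg a_def by simp
  have M0: "0 \<le> 2 * L" using L0 by simp
  show ?thesis
    using final[where U = u and Gx = "\<lambda>t x. deriv (\<lambda>y. u t y) x" and a = a
        and r = r and M = "2*L", OF r0 a0 M0 cont E1 E2]
    unfolding a_def by simp
qed

end
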